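(* Let $G$ be a connected weighted multigraph on the vertex set $V$, $|V|=n\ge2$, with positive edge weights and Laplacian matrix $L$, and let $d^r$ be the resistance distance on $V$. Then for all distinct $i,j\in V$, $$d^r(i,j)=n^{-1}\bigl((L_{jj})^{-1}_i+(L_{ii})^{-1}_j\bigr)\mathbf 1,$$ where $\mathbf 1$ is the vector of $n-1$ ones and $(L_{jj})^{-1}_i$ is the row indexed by $i$ of the inverse of the principal submatrix $L_{jj}$.
   Context: Loops and multiple edges are allowed. The weighted adjacency matrix $A=(a_{ij})$ has $a_{ij}$ equal to the sum of weights of the edges joining $i$ and $j$; $L=\operatorname{diag}(A\mathbf 1)-A$. $L_{jj}$ is $L$ with row $j$ and column $j$ deleted (indexed by $V\setminus\{j\}$). The resistance distance is $d^r(i,j)=(e_i-e_j)^{\mathsf T}L^{+}(e_i-e_j)$ with $L^+$ the Moore–Penrose inverse (the effective resistance with edge conductances equal to the weights). *)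

theory Defs
  imports "HOL-Analysis.Analysis"
begin

text \<open>A weighted multigraph on the finite vertex type 'v (vertex set V = UNIV):
  a finite set E of edge identifiers, each edge e has an endpoint set ends e
  (one vertex for a loop, two for an ordinary edge) and a weight w e.\<close>

definition is_weighted_multigraph ::
  "'e set \<Rightarrow> ('e \<Rightarrow> 'v set) \<Rightarrow> ('e \<Rightarrow> real) \<Rightarrow> bool" where
  "is_weighted_multigraph E ends w \<longleftrightarrow>
     finite E \<and> (\<forall>e\<in>E. card (ends e) = 1 \<or> card (ends e) = 2)"

definition wadj :: "'e set \<Rightarrow> ('e \<Rightarrow> 'v set) \<Rightarrow> ('e \<Rightarrow> real) \<Rightarrow> 'v \<Rightarrow> 'v \<Rightarrow> real" where
  "wadj E ends w i j = (\<Sum>e\<in>{e\<in>E. ends e = {i, j}}. w e)"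

definition laplacian ::
  "'e set \<Rightarrow> ('e \<Rightarrow> 'v::finite set) \<Rightarrow> ('e \<Rightarrow> real) \<Rightarrow> real^'v^'v" where
  "laplacian E ends w =
     (\<chi> i j. (if i = j then (\<Sum>k\<in>UNIV. wadj E ends w i k) else 0) - wadj E ends w i j)"

definition mg_connected :: "'e set \<Rightarrow> ('e \<Rightarrow> 'v set) \<Rightarrow> bool" where
  "mg_connected E ends \<longleftrightarrow>
     (\<forall>u v. (u, v) \<in> {(x, y). \<exists>e\<in>E. ends e = {x, y}}\<^sup>*)"

definition moore_penrose :: "real^'n^'n \<Rightarrow> real^'n^'n" where
  "moore_penrose M = (THE X. M ** X ** M = M \<and> X ** M ** X = X \<and>
       transpose (M ** X) = M ** X \<and> transpose (X ** M) = X ** M)"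

definition resistance_distance ::
  "'e set \<Rightarrow> ('e \<Rightarrow> 'v::finite set) \<Rightarrow> ('e \<Rightarrow> real) \<Rightarrow> 'v \<Rightarrow> 'v \<Rightarrow> real" where
  "resistance_distance E ends w i j =
     (let x = axis i (1::real) - axis j 1
      in x \<bullet> (moore_penrose (laplacian E ends w) *v x))"

text \<open>The principal submatrix L_jj is L restricted to S = V - {j}; its inverse
  is the matrix N on S with M N = N M = I on S (set to 0 outside S).\<close>
definition principal_submatrix :: "real^'v^'v \<Rightarrow> 'v \<Rightarrow> 'v \<Rightarrow> 'v \<Rightarrow> real" where
  "principal_submatrix M j a b = (if a \<noteq> j \<and> b \<noteq> j then M $ a $ b else 0)"

definition is_inverse_on :: "'v set \<Rightarrow> ('v \<Rightarrow> 'v \<Rightarrow> real) \<Rightarrow> ('v \<Rightarrow> 'v \<Rightarrow> real) \<Rightarrow> bool" where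
  "is_inverse_on S M N \<longleftrightarrow>
     (\<forall>a\<in>S. \<forall>b\<in>S. (\<Sum>k\<in>S. M a k * N k b) = (if a = b then 1 else 0)
                  \<and> (\<Sum>k\<in>S. N a k * M k b) = (if a = b then 1 else 0))"

definition inverse_on :: "'v set \<Rightarrow> ('v \<Rightarrow> 'v \<Rightarrow> real) \<Rightarrow> 'v \<Rightarrow> 'v \<Rightarrow> real" where
  "inverse_on S M = (THE N. is_inverse_on S M N \<and> (\<forall>a b. a \<notin> S \<or> b \<notin> S \<longrightarrow> N a b = 0))"

definition principal_sub_inverse :: "real^'v^'v \<Rightarrow> 'v::finite \<Rightarrow> 'v \<Rightarrow> 'v \<Rightarrow> real" where
  "principal_sub_inverse M j = inverse_on (UNIV - {j}) (principal_submatrix M j)"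

end

theory Submission imports Defs begin


lemma wadj_sym: "wadj E ends w a b = wadj E ends w b a"
  unfolding wadj_def by (simp add: insert_commute)

lemma wadj_nonneg: assumes "\<forall>e\<in>E. w e > 0" shows "wadj E ends w a b \<ge> 0"
  unfolding wadj_def using assms by (intro sum_nonneg) auto

lemma wadj_pos: assumes "finite E" "\<forall>e\<in>E. w e > 0" "e \<in> E" "ends e = {a,b}"
  shows "wadj E ends w a b > 0"
proof -
  have "w e \<le> wadj E ends w a b" unfolding wadj_def
    using assms by (intro member_le_sum) auto
  thus ?thesis using assms by force
qed

lemma lap_entry: "laplacian E ends w $ a $ b =
   (if a = b then (\<Sum>k\<in>UNIV. wadj E ends w a k) else 0) - wadj E ends w a b"
  unfolding laplacian_def by simp

lemma lap_sym: "laplacian E ends w $ a $ b = laplacian E ends w $ b $ a"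
  unfolding lap_entry by (simp add: wadj_sym)

lemma lap_row: "(\<Sum>b\<in>UNIV. laplacian E ends w $ a $ b) = 0"
proof -
  have "(\<Sum>b\<in>UNIV. laplacian E ends w $ a $ b) = (\<Sum>b\<in>UNIV. (if a = b then (\<Sum>k\<in>UNIV. wadj E ends w a k) else 0)) - (\<Sum>b\<in>UNIV. wadj E ends w a b)"
    unfolding lap_entry sum_subtractf ..
  also have "\<dots> = 0" by (simp add: sum.delta)
  finally show ?thesis .
qed

lemma lap_col: "(\<Sum>a\<in>UNIV. laplacian E ends w $ a $ b) = 0"
  using lap_row[of E ends w b] by (simp add: lap_sym)

lemma lap_quad:
  fixes x :: "real^'v::finite"
  shows "(\<Sum>a\<in>UNIV. \<Sum>b\<in>UNIV. x$a * laplacian E ends w $ a $ b * x$b) =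
         (\<Sum>a\<in>UNIV. \<Sum>b\<in>UNIV. wadj E ends w a b * x$a * (x$a - x$b))"
proof -
  let ?A = "wadj E ends w"
  have "(\<Sum>b\<in>UNIV. x$a * laplacian E ends w $ a $ b * x$b) =
         (\<Sum>b\<in>UNIV. ?A a b * x$a * (x$a - x$b))" for a
  proof -
    have "(\<Sum>b\<in>UNIV. x$a * laplacian E ends w $ a $ b * x$b) =
      (\<Sum>b\<in>UNIV. x$a * (if a = b then (\<Sum>k\<in>UNIV. ?A a k) else 0) * x$b) - (\<Sum>b\<in>UNIV. x$a * ?A a b * x$b)"
      unfolding lap_entry by (simp add: algebra_simps sum_subtractf)
    also have "(\<Sum>b\<in>UNIV. x$a * (if a = b then (\<Sum>k\<in>UNIV. ?A a k) else 0) * x$b) = x$a * x$a * (\<Sum>k\<in>UNIV. ?A a k)"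
    proof -
      have "(\<Sum>b\<in>UNIV. x$a * (if a = b then (\<Sum>k\<in>UNIV. ?A a k) else 0) * x$b) = (\<Sum>b\<in>UNIV. (if a = b then x$a * (\<Sum>k\<in>UNIV. ?A a k) * x$a else 0))"
        by (intro sum.cong) auto
      also have "\<dots> = x$a * (\<Sum>k\<in>UNIV. ?A a k) * x$a" by (simp add: sum.delta)
      finally show ?thesis by (simp add: algebra_simps)
    qed
    also have "\<dots> = (\<Sum>b\<in>UNIV. ?A a b * x$a * x$a)"
      unfolding sum_distrib_left by (intro sum.cong refl) (simp add: algebra_simps)
    finally show ?thesis by (simp add: algebra_simps sum_subtractf)
  qed
  thus ?thesis by simp
qed

lemma lap_ker:
  fixes x :: "real^'v::finite"
  assumes fin: "finite E" and pos: "\<forall>e\<in>E. w e > 0" and con: "mg_connected E ends"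
    and ker: "laplacian E ends w *v x = 0"
  shows "x$u = x$v"
proof -
  let ?A = "wadj E ends w"
  define Q where "Q = (\<Sum>a\<in>UNIV. \<Sum>b\<in>UNIV. ?A a b * x$a * (x$a - x$b))"
  have "Q = (\<Sum>a\<in>UNIV. \<Sum>b\<in>UNIV. x$a * laplacian E ends w $ a $ b * x$b)"
    unfolding Q_def lap_quad ..
  also have "\<dots> = (\<Sum>a\<in>UNIV. x$a * (laplacian E ends w *v x)$a)"
    by (simp add: matrix_vector_mult_def sum_distrib_left mult.assoc)
  finally have Q0: "Q = 0" using ker by simp
  have Q2: "(\<Sum>b\<in>UNIV. \<Sum>a\<in>UNIV. ?A a b * x$b * (x$b - x$a)) = Q"
  proof -
    have pw: "?A a b * x$b * (x$b - x$a) = ?A b a * x$b * (x$b - x$a)" for a b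
      using wadj_sym[of E ends w a b] by simp
    show ?thesis unfolding Q_def by (rule sum.cong[OF refl], rule sum.cong[OF refl], rule pw)
  qed
  have T: "(\<Sum>a\<in>UNIV. \<Sum>b\<in>UNIV. ?A a b * (x$a - x$b)^2) = Q + Q"
  proof -
    have "(\<Sum>a\<in>UNIV. \<Sum>b\<in>UNIV. ?A a b * (x$a - x$b)^2) =
      (\<Sum>a\<in>UNIV. \<Sum>b\<in>UNIV. ?A a b * x$a * (x$a - x$b) + ?A a b * x$b * (x$b - x$a))"
      by (intro sum.cong refl) (simp add: power2_eq_square algebra_simps)
    also have "\<dots> = Q + (\<Sum>a\<in>UNIV. \<Sum>b\<in>UNIV. ?A a b * x$b * (x$b - x$a))"
      unfolding Q_def by (simp add: sum.distrib)
    also have "(\<Sum>a\<in>UNIV. \<Sum>b\<in>UNIV. ?A a b * x$b * (x$b - x$a)) = Q"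
      using Q2 by (subst sum.swap) simp
    finally show ?thesis .
  qed
  have nn: "\<And>a b. ?A a b * (x$a - x$b)^2 \<ge> 0" by (intro mult_nonneg_nonneg wadj_nonneg[OF pos] zero_le_power2)
  have z: "?A a b * (x$a - x$b)^2 = 0" for a b
  proof -
    have H0: "(\<Sum>c\<in>UNIV. \<Sum>d\<in>UNIV. ?A c d * (x$c - x$d)^2) = 0" using T Q0 by simp
    have s: "\<And>c. c \<in> UNIV \<Longrightarrow> (\<Sum>d\<in>UNIV. ?A c d * (x$c - x$d)^2) \<ge> 0"
      by (intro sum_nonneg nn)
    have H1: "\<forall>c\<in>UNIV. (\<Sum>d\<in>UNIV. ?A c d * (x$c - x$d)^2) = 0"
      using sum_nonneg_eq_0_iff[of UNIV "\<lambda>c. \<Sum>d\<in>UNIV. ?A c d * (x$c - x$d)^2"] s H0 by simp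
    have H2: "(\<Sum>d\<in>UNIV. ?A a d * (x$a - x$d)^2) = 0" using H1 by simp
    have s2: "\<And>d. d \<in> UNIV \<Longrightarrow> ?A a d * (x$a - x$d)^2 \<ge> 0" by (rule nn)
    have "\<forall>d\<in>UNIV. ?A a d * (x$a - x$d)^2 = 0"
      using sum_nonneg_eq_0_iff[of UNIV "\<lambda>d. ?A a d * (x$a - x$d)^2"] s2 H2 by simp
    thus ?thesis by simp
  qed
  have edge: "x$a = x$b" if "(a,b) \<in> {(x, y). \<exists>e\<in>E. ends e = {x, y}}" for a b
  proof -
    from that obtain e where e: "e \<in> E" "ends e = {a,b}" by auto
    have "?A a b > 0" by (rule wadj_pos[where ends=ends and a=a and b=b, OF fin pos e])
    with z[of a b] show ?thesis by simp
  qed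
  have "(u,v) \<in> {(x, y). \<exists>e\<in>E. ends e = {x, y}}\<^sup>*" using con unfolding mg_connected_def by blast
  thus ?thesis
  proof (induction rule: rtrancl_induct)
    case base then show ?case by simp
  next
    case (step y z) then show ?case using edge by simp
  qed
qed

lemma G_inv:
  fixes E :: "'e set" and ends :: "'e \<Rightarrow> 'v::finite set"
  assumes fin: "finite E" and pos: "\<forall>e\<in>E. w e > 0" and con: "mg_connected E ends"
  shows "\<exists>H. H ** (laplacian E ends w + (\<chi> a b. 1)) = mat (1::real)"
proof -
  let ?L = "laplacian E ends w"
  have "y = 0" if y: "(?L + (\<chi> a b. 1)) *v y = 0" for y :: "real^'v"
  proof -
    have comp: "(\<Sum>b\<in>UNIV. ?L$a$b * y$b) + sum (\<lambda>b. y$b) UNIV = 0" for a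
      using y[THEN arg_cong[where f="\<lambda>v. v$a"]]
      by (simp add: matrix_vector_mult_def sum.distrib algebra_simps)
    have "(\<Sum>a\<in>UNIV. (\<Sum>b\<in>UNIV. ?L$a$b * y$b) + sum (\<lambda>b. y$b) UNIV) = 0"
      using comp by simp
    moreover have "(\<Sum>a\<in>UNIV. (\<Sum>b\<in>UNIV. ?L$a$b * y$b)) = 0"
      by (subst sum.swap) (simp add: sum_distrib_right[symmetric] lap_col)
    ultimately have "real CARD('v) * sum (\<lambda>b. y$b) UNIV = 0" by (simp add: sum.distrib)
    hence s0: "sum (\<lambda>b. y$b) UNIV = 0" by simp
    hence "?L *v y = 0" using comp by (simp add: vec_eq_iff matrix_vector_mult_def)
    hence c: "\<And>u v. y$u = y$v" using lap_ker[OF fin pos con] by blast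
    fix v0 :: 'v
    have "sum (\<lambda>b. y$b) UNIV = (\<Sum>b\<in>(UNIV::'v set). y$v0)" by (rule sum.cong[OF refl]) (rule c)
    hence "sum (\<lambda>b. y$b) UNIV = real CARD('v) * y$v0" by simp
    with s0 have "y$v0 = 0" by simp
    hence "\<And>u. y$u = 0" using c by metis
    thus "y = 0" by (simp add: vec_eq_iff)
  qed
  thus ?thesis using matrix_left_invertible_ker by blast
qed



lemma mp_unique:
  fixes A X Y :: "real^'n^'n"
  assumes "A ** X ** A = A" "X ** A ** X = X" "transpose (A ** X) = A ** X" "transpose (X ** A) = X ** A"
    and "A ** Y ** A = A" "Y ** A ** Y = Y" "transpose (A ** Y) = A ** Y" "transpose (Y ** A) = Y ** A"
  shows "X = Y"
proof -
  have "X = X ** (A ** X)" using assms(2) by (simp add: matrix_mul_assoc)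
  also have "\<dots> = X ** transpose (A ** X)" using assms(3) by simp
  also have "\<dots> = X ** (transpose X ** transpose A)" by (simp add: matrix_transpose_mul)
  also have "transpose A = transpose (A ** Y ** A)" using assms(5) by simp
  also have "\<dots> = transpose A ** (transpose Y ** transpose A)" by (simp add: matrix_transpose_mul matrix_mul_assoc)
  also have "X ** (transpose X ** (transpose A ** (transpose Y ** transpose A))) =
       X ** (transpose (A ** X) ** transpose (A ** Y))" by (simp add: matrix_transpose_mul matrix_mul_assoc)
  also have "\<dots> = X ** A ** X ** A ** Y" using assms(3,7) by (simp add: matrix_mul_assoc)
  also have "\<dots> = X ** A ** Y" using assms(2) by simp
  finally have x: "X = X ** A ** Y" .
  have "Y = (Y ** A) ** Y" using assms(6) by (simp add: matrix_mul_assoc)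
  also have "\<dots> = transpose (Y ** A) ** Y" using assms(8) by simp
  also have "\<dots> = transpose A ** transpose Y ** Y" by (simp add: matrix_transpose_mul)
  also have "transpose A = transpose (A ** X ** A)" using assms(1) by simp
  also have "\<dots> = transpose A ** transpose X ** transpose A" by (simp add: matrix_transpose_mul matrix_mul_assoc)
  also have "transpose A ** transpose X ** transpose A ** transpose Y ** Y =
       transpose (X ** A) ** transpose (Y ** A) ** Y" by (simp add: matrix_transpose_mul matrix_mul_assoc)
  also have "\<dots> = X ** A ** (Y ** A ** Y)" using assms(4,8) by (simp add: matrix_mul_assoc)
  also have "\<dots> = X ** A ** Y" using assms(6) by simp
  finally show ?thesis using x by simp
qed

lemma mp_eq:
  fixes A X :: "real^'n^'n"
  assumes "A ** X ** A = A" "X ** A ** X = X" "transpose (A ** X) = A ** X" "transpose (X ** A) = X ** A"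
  shows "moore_penrose A = X"
  unfolding moore_penrose_def
proof (rule the_equality)
  show "A ** X ** A = A \<and> X ** A ** X = X \<and> transpose (A ** X) = A ** X \<and> transpose (X ** A) = X ** A"
    using assms by (intro conjI)
  fix Y assume "A ** Y ** A = A \<and> Y ** A ** Y = Y \<and> transpose (A ** Y) = A ** Y \<and> transpose (Y ** A) = Y ** A"
  hence y: "A ** Y ** A = A" "Y ** A ** Y = Y" "transpose (A ** Y) = A ** Y" "transpose (Y ** A) = Y ** A"
    by auto
  show "Y = X" using mp_unique[OF assms y] by (rule sym)
qed

lemma inv_on_unique:
  fixes S :: "'v set"
  assumes fin: "finite S" and 1: "is_inverse_on S M N1" and 2: "is_inverse_on S M N2"
    and z1: "\<forall>a b. a \<notin> S \<or> b \<notin> S \<longrightarrow> N1 a b = 0"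
    and z2: "\<forall>a b. a \<notin> S \<or> b \<notin> S \<longrightarrow> N2 a b = 0"
  shows "N1 = N2"
proof (intro ext)
  fix a b
  show "N1 a b = N2 a b"
  proof (cases "a \<in> S \<and> b \<in> S")
    case True
    hence "N1 a b = (\<Sum>k\<in>S. N1 a k * (if k = b then 1 else 0))" using fin
      by (simp add: if_distrib sum.delta' cong: if_cong)
    also have "\<dots> = (\<Sum>k\<in>S. N1 a k * (\<Sum>l\<in>S. M k l * N2 l b))"
      using 2 True unfolding is_inverse_on_def by (intro sum.cong refl) auto
    also have "\<dots> = (\<Sum>l\<in>S. (\<Sum>k\<in>S. N1 a k * M k l) * N2 l b)"
      by (simp add: sum_distrib_left sum_distrib_right mult.assoc) (rule sum.swap)
    also have "\<dots> = (\<Sum>l\<in>S. (if a = l then 1 else 0) * N2 l b)"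
      using 1 True unfolding is_inverse_on_def by (intro sum.cong refl) auto
    also have "\<dots> = (\<Sum>l\<in>S. if a = l then N2 l b else 0)" by (intro sum.cong refl) simp
    also have "\<dots> = N2 a b" using fin True by (simp add: sum.delta)
    finally show ?thesis .
  next
    case False thus ?thesis using z1 z2 by auto
  qed
qed

lemma inverse_on_eq:
  assumes "finite S" "is_inverse_on S M N" "\<forall>a b. a \<notin> S \<or> b \<notin> S \<longrightarrow> N a b = 0"
  shows "inverse_on S M = N"
  unfolding inverse_on_def
proof (rule the_equality)
  show "is_inverse_on S M N \<and> (\<forall>a b. a \<notin> S \<or> b \<notin> S \<longrightarrow> N a b = 0)"
    using assms by (intro conjI)
  fix N' assume "is_inverse_on S M N' \<and> (\<forall>a b. a \<notin> S \<or> b \<notin> S \<longrightarrow> N' a b = 0)"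
  hence y: "is_inverse_on S M N'" "\<forall>a b. a \<notin> S \<or> b \<notin> S \<longrightarrow> N' a b = 0"
    by auto
  show "N' = N" by (rule inv_on_unique[OF assms(1) y(1) assms(2) y(2) assms(3)])
qed



lemma alg:
  fixes L H :: "real^'v::finite^'v" and i j :: 'v
  assumes sym: "\<And>a b. L$a$b = L$b$a" and row: "\<And>a. (\<Sum>b\<in>UNIV. L$a$b) = 0"
    and inv: "H ** (L + (\<chi> a b. 1)) = mat 1" and ij: "i \<noteq> j"
  shows "(let x = axis i (1::real) - axis j 1 in x \<bullet> (moore_penrose L *v x)) =
    (1 / real CARD('v)) *
      ((\<Sum>k\<in>UNIV - {j}. principal_sub_inverse L j i k)
     + (\<Sum>k\<in>UNIV - {i}. principal_sub_inverse L i j k))"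
proof -
  define n where "n = real CARD('v)"
  have npos: "n > 0" unfolding n_def by simp
  define G where "G = L + (\<chi> a b. 1)"
  have Ge: "G$a$b = L$a$b + 1" for a b unfolding G_def by simp
  have col: "(\<Sum>a\<in>UNIV. L$a$b) = 0" for b using row[of b] by (simp add: sym)
  have GH: "G ** H = mat 1" using inv matrix_left_right_inverse unfolding G_def by blast
  have Gt: "transpose G = G" by (simp add: vec_eq_iff transpose_def Ge sym)
  have tHG: "transpose H ** G = mat 1"
    by (metis GH Gt matrix_transpose_mul transpose_mat)
  have "transpose H = transpose H ** (G ** H)" using GH by simp
  also have "\<dots> = H" using tHG inv unfolding G_def by (simp add: matrix_mul_assoc)
  finally have Ht: "transpose H = H" .
  have Hs: "H$a$b = H$b$a" for a b using Ht by (metis transpose_def vec_lambda_beta)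
  have HGe: "(\<Sum>k\<in>UNIV. H$a$k * G$k$b) = (if a = b then 1 else 0)" for a b
    using inv[THEN arg_cong[where f="\<lambda>M. M$a$b"]] unfolding G_def[symmetric]
    by (simp add: matrix_matrix_mult_def mat_def)
  have GHe: "(\<Sum>k\<in>UNIV. G$a$k * H$k$b) = (if a = b then 1 else 0)" for a b
    using GH[THEN arg_cong[where f="\<lambda>M. M$a$b"]]
    by (simp add: matrix_matrix_mult_def mat_def)
  have rs: "(\<Sum>k\<in>UNIV. H$a$k) = 1 / n" for a
  proof -
    have "1 = (\<Sum>b\<in>UNIV. \<Sum>k\<in>UNIV. H$a$k * G$k$b)" using HGe[of a] by (simp add: sum.delta)
    also have "\<dots> = (\<Sum>k\<in>UNIV. H$a$k * (\<Sum>b\<in>UNIV. G$k$b))"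
      by (subst sum.swap) (simp add: sum_distrib_left)
    also have "\<dots> = (\<Sum>k\<in>UNIV. H$a$k * n)"
      by (simp add: Ge sum.distrib row n_def)
    finally have f: "1 = (\<Sum>k\<in>UNIV. H$a$k * n)" .
    have "(\<Sum>k\<in>UNIV. H$a$k) * n = 1" using f by (simp add: sum_distrib_right)
    thus ?thesis using npos by (simp add: field_simps)
  qed
  have cs: "(\<Sum>k\<in>UNIV. H$k$b) = 1 / n" for b using rs[of b] by (simp add: Hs)
  have LH: "(\<Sum>k\<in>UNIV. L$a$k * H$k$b) = (if a = b then 1 else 0) - 1/n" for a b
    using GHe[of a b] by (simp add: Ge algebra_simps sum.distrib cs)
  have HL: "(\<Sum>k\<in>UNIV. H$a$k * L$k$b) = (if a = b then 1 else 0) - 1/n" for a b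
    using HGe[of a b] by (simp add: Ge algebra_simps sum.distrib rs)
  define c where "c = 1 / n^2"
  define M where "M = (\<chi> a b. H$a$b - c)"
  have Me: "M$a$b = H$a$b - c" for a b unfolding M_def by simp
  have rowc: "(\<Sum>k\<in>UNIV. c * L$a$k) = 0" for a by (simp add: sum_distrib_left[symmetric] row)
  have colc: "(\<Sum>k\<in>UNIV. c * L$k$b) = 0" for b by (simp add: sum_distrib_left[symmetric] col)
  have LM: "(L ** M)$a$b = (if a = b then 1 else 0) - 1/n" for a b
    using LH[of a b] by (simp add: matrix_matrix_mult_def Me algebra_simps sum_subtractf
        rowc)
  have MLx: "(M ** L)$a$b = (if a = b then 1 else 0) - 1/n" for a b
    using HL[of a b] by (simp add: matrix_matrix_mult_def Me algebra_simps sum_subtractf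
        colc)
  have csM: "(\<Sum>k\<in>UNIV. M$k$b) = 0" for b
    using cs[of b] npos by (simp add: Me sum_subtractf c_def n_def power2_eq_square)
  have del: "(\<Sum>k\<in>UNIV. ((if a = k then 1 else 0) - 1/n) * f k) = f a - (1/n) * (\<Sum>k\<in>UNIV. f k)"
    for a and f :: "'v \<Rightarrow> real"
  proof -
    have "(\<Sum>k\<in>UNIV. ((if a = k then 1 else 0) - 1/n) * f k) =
      (\<Sum>k\<in>UNIV. (if a = k then f k else 0)) - (\<Sum>k\<in>UNIV. 1/n * f k)"
      unfolding sum_subtractf[symmetric] by (intro sum.cong refl) (simp add: algebra_simps)
    thus ?thesis by (simp add: sum_distrib_left[symmetric] sum_divide_distrib[symmetric])
  qed
  have e1: "L ** M ** L = L"
  proof -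
    have "(L ** M ** L)$a$b = L$a$b" for a b
      unfolding matrix_matrix_mult_def[of "L ** M" L] using del[of a "\<lambda>k. L$k$b"]
      by (simp add: LM col)
    thus ?thesis by (simp add: vec_eq_iff)
  qed
  have e2: "M ** L ** M = M"
  proof -
    have "(M ** L ** M)$a$b = M$a$b" for a b
      unfolding matrix_matrix_mult_def[of "M ** L" M] using del[of a "\<lambda>k. M$k$b"]
      by (simp add: MLx csM)
    thus ?thesis by (simp add: vec_eq_iff)
  qed
  have e3: "transpose (L ** M) = L ** M"
    by (simp add: vec_eq_iff transpose_def LM)
  have e4: "transpose (M ** L) = M ** L"
    by (simp add: vec_eq_iff transpose_def MLx)
  have mp: "moore_penrose L = M" by (rule mp_eq[OF e1 e2 e3 e4])
  have res: "(let x = axis i (1::real) - axis j 1 in x \<bullet> (moore_penrose L *v x)) =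
      H$i$i - H$i$j - H$j$i + H$j$j"
    by (simp add: mp inner_diff_left inner_axis' matrix_vector_mult_diff_distrib
        matrix_vector_mult_basis column_def Me)
  define N where "N t = (\<lambda>a b. if a \<noteq> t \<and> b \<noteq> t then H$a$b - H$t$b - H$a$t + H$t$t else 0)" for t
  have subinv: "principal_sub_inverse L t = N t" for t
    unfolding principal_sub_inverse_def
  proof (rule inverse_on_eq)
    show "finite (UNIV - {t})" by simp
    show "\<forall>a b. a \<notin> UNIV - {t} \<or> b \<notin> UNIV - {t} \<longrightarrow> N t a b = 0"
      unfolding N_def by auto
    show "is_inverse_on (UNIV - {t}) (principal_submatrix L t) (N t)"
      unfolding is_inverse_on_def
    proof (intro ballI conjI)
      fix a b assume "a \<in> UNIV - {t}" "b \<in> UNIV - {t}"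
      hence a: "a \<noteq> t" and b: "b \<noteq> t" by auto
      have "(\<Sum>k\<in>UNIV - {t}. principal_submatrix L t a k * N t k b) =
          (\<Sum>k\<in>UNIV - {t}. L$a$k * (H$k$b - H$t$b - H$k$t + H$t$t))"
        using a b by (intro sum.cong) (auto simp: principal_submatrix_def N_def)
      also have "\<dots> = (\<Sum>k\<in>UNIV. L$a$k * (H$k$b - H$t$b - H$k$t + H$t$t))"
        by (simp add: sum_diff1)
      also have "\<dots> = (\<Sum>k\<in>UNIV. L$a$k * H$k$b) - H$t$b * (\<Sum>k\<in>UNIV. L$a$k)
          - (\<Sum>k\<in>UNIV. L$a$k * H$k$t) + H$t$t * (\<Sum>k\<in>UNIV. L$a$k)"
        by (simp add: algebra_simps sum.distrib sum_subtractf sum_distrib_left)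
      also have "\<dots> = (if a = b then 1 else 0)" using a by (simp add: LH row)
      finally show "(\<Sum>k\<in>UNIV - {t}. principal_submatrix L t a k * N t k b) = (if a = b then 1 else 0)" .
      have "(\<Sum>k\<in>UNIV - {t}. N t a k * principal_submatrix L t k b) =
          (\<Sum>k\<in>UNIV - {t}. (H$a$k - H$t$k - H$a$t + H$t$t) * L$k$b)"
        using a b by (intro sum.cong) (auto simp: principal_submatrix_def N_def)
      also have "\<dots> = (\<Sum>k\<in>UNIV. (H$a$k - H$t$k - H$a$t + H$t$t) * L$k$b)"
        by (simp add: sum_diff1)
      also have "\<dots> = (\<Sum>k\<in>UNIV. H$a$k * L$k$b) - (\<Sum>k\<in>UNIV. H$t$k * L$k$b)
          - H$a$t * (\<Sum>k\<in>UNIV. L$k$b) + H$t$t * (\<Sum>k\<in>UNIV. L$k$b)"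
        by (simp add: algebra_simps sum.distrib sum_subtractf sum_distrib_left)
      also have "\<dots> = (if a = b then 1 else 0)" using b by (simp add: HL col)
      finally show "(\<Sum>k\<in>UNIV - {t}. N t a k * principal_submatrix L t k b) = (if a = b then 1 else 0)" .
    qed
  qed
  have rsum: "(\<Sum>k\<in>UNIV - {t}. N t a k) = n * (H$t$t - H$a$t)" if a: "a \<noteq> t" for a t
  proof -
    have "(\<Sum>k\<in>UNIV - {t}. N t a k) = (\<Sum>k\<in>UNIV - {t}. H$a$k - H$t$k - H$a$t + H$t$t)"
      using a by (intro sum.cong) (auto simp: N_def)
    also have "\<dots> = (\<Sum>k\<in>UNIV. H$a$k - H$t$k - H$a$t + H$t$t)"
      by (simp add: sum_diff1)
    also have "\<dots> = (\<Sum>k\<in>UNIV. H$a$k) - (\<Sum>k\<in>UNIV. H$t$k) - n * H$a$t + n * H$t$t"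
      by (simp add: sum.distrib sum_subtractf n_def)
    also have "\<dots> = n * (H$t$t - H$a$t)" by (simp add: rs algebra_simps)
    finally show ?thesis .
  qed
  show ?thesis unfolding res subinv rsum[OF ij] rsum[OF ij[symmetric]]
    using npos by (simp add: field_simps n_def)
qed


theorem corollary8:
  fixes E :: "'e set" and ends :: "'e \<Rightarrow> 'v::finite set" and w :: "'e \<Rightarrow> real"
  assumes "is_weighted_multigraph E ends w"
    and "\<forall>e\<in>E. w e > 0"
    and "mg_connected E ends"
    and "CARD('v) \<ge> 2"
    and "i \<noteq> j"
  shows "resistance_distance E ends w i j =
    (1 / real CARD('v)) *
      ((\<Sum>k\<in>UNIV - {j}. principal_sub_inverse (laplacian E ends w) j i k)
     + (\<Sum>k\<in>UNIV - {i}. principal_sub_inverse (laplacian E ends w) i j k))"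
proof -
  have fin: "finite E" using assms(1) unfolding is_weighted_multigraph_def by simp
  obtain H where H: "H ** (laplacian E ends w + (\<chi> a b. 1)) = mat (1::real)"
    using G_inv[OF fin assms(2) assms(3)] by blast
  show ?thesis unfolding resistance_distance_def
    by (rule alg[OF lap_sym lap_row H assms(5)])
qed

end
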